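(* Let $\mathbf{G}$ be a connected groupoid and let $p:\mathbf{\tilde G}\to\mathbf{G}$, $r:\mathbf{\tilde G}\to\mathbf{\tilde H}$, $q:\mathbf{\tilde H}\to\mathbf{G}$ be connected covering projections with $qr=p$, where $p$ and $r$ are regular. Let $\Gamma=\mathrm{Cov}(\mathbf{\tilde G}/\mathbf{G})$ and $\Pi=\mathrm{Cov}(\mathbf{\tilde G}/\mathbf{\tilde H})$ (so $\Pi\subseteq\Gamma$), both acting on $\mathbf{\tilde G}$, and let $p':\mathbf{\tilde G}\to\mathbf{\tilde G}/\Gamma$ and $r':\mathbf{\tilde G}\to\mathbf{\tilde G}/\Pi$ be the orbit morphisms. Then there is a covering projection $q':\mathbf{\tilde G}/\Pi\to\mathbf{\tilde G}/\Gamma$ with $q'r'=p'$, where $p',r',q'$ are covering projections, and $(\mathbf{\tilde G},p')$ is equivalent to $(\mathbf{\tilde G},p)$, $(\mathbf{\tilde G},r')$ is equivalent to $(\mathbf{\tilde G},r)$, and $(\mathbf{\tilde G}/\Pi,q')$ is equivalent to $(\mathbf{\tilde H},q)$.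
   Context: A groupoid is a small category in which every arrow is invertible; $t(X)$ is the set of arrows with codomain $X$. A groupoid morphism $p:\mathbf{\tilde G}\to\mathbf{G}$ is a covering projection if for every object $\tilde X$ of $\mathbf{\tilde G}$ the restriction $t(\tilde X)\to t(p\tilde X)$ is a bijection; connected if domain and codomain are connected; regular if $p_*\pi(\mathbf{\tilde G},\tilde X)$ is normal in $\pi(\mathbf{G},p\tilde X)$ for every object $\tilde X$ ($\pi(\mathbf{G},X)$ being the group of arrows $X\to X$). $\mathrm{Cov}(\mathbf{\tilde G}/\mathbf{G})$ is the group of groupoid isomorphisms $h$ of $\mathbf{\tilde G}$ with $ph=p$. For a group acting on a groupoid by groupoid morphisms, the orbit groupoid and orbit morphism $o$ are defined by $o(\gamma g)=o(g)$ for all group elements $\gamma$ and arrows $g$, together with the universal property that any groupoid morphism $f$ with $f(\gamma g)=f(g)$ factors uniquely through $o$. Covering groupoids $(\mathbf{\tilde G},p)$ of $\mathbf{G}$ and $(\mathbf{\tilde H},q)$ of $\mathbf{H}$ are equivalent if there are groupoid isomorphisms $\varphi:\mathbf{\tilde H}\to\mathbf{\tilde G}$ and $\psi:\mathbf{H}\to\mathbf{G}$ with $p\varphi=\psi q$. *)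

theory Defs
  imports Main
begin

text \<open>A (small) groupoid: a set of objects, a set of arrows, domain and codomain maps,
  composition (comp g f is "g after f", defined when dom g = cod f), identities and inverses.\<close>

record ('o, 'a) groupoid =
  Obj :: "'o set"
  Arr :: "'a set"
  dom :: "'a \<Rightarrow> 'o"
  cod :: "'a \<Rightarrow> 'o"
  comp :: "'a \<Rightarrow> 'a \<Rightarrow> 'a"
  ide :: "'o \<Rightarrow> 'a"
  inv :: "'a \<Rightarrow> 'a"

definition groupoid :: "('o, 'a) groupoid \<Rightarrow> bool" where
  "groupoid G \<longleftrightarrow>
     (\<forall>g\<in>Arr G. dom G g \<in> Obj G \<and> cod G g \<in> Obj G) \<and>
     (\<forall>g\<in>Arr G. \<forall>f\<in>Arr G. dom G g = cod G f \<longrightarrow>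
        comp G g f \<in> Arr G \<and> dom G (comp G g f) = dom G f \<and> cod G (comp G g f) = cod G g) \<and>
     (\<forall>h\<in>Arr G. \<forall>g\<in>Arr G. \<forall>f\<in>Arr G. dom G h = cod G g \<longrightarrow> dom G g = cod G f \<longrightarrow>
        comp G h (comp G g f) = comp G (comp G h g) f) \<and>
     (\<forall>X\<in>Obj G. ide G X \<in> Arr G \<and> dom G (ide G X) = X \<and> cod G (ide G X) = X) \<and>
     (\<forall>g\<in>Arr G. comp G g (ide G (dom G g)) = g \<and> comp G (ide G (cod G g)) g = g) \<and>
     (\<forall>g\<in>Arr G. inv G g \<in> Arr G \<and> dom G (inv G g) = cod G g \<and> cod G (inv G g) = dom G g \<and>
        comp G (inv G g) g = ide G (dom G g) \<and> comp G g (inv G g) = ide G (cod G g))"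

definition tset :: "('o, 'a) groupoid \<Rightarrow> 'o \<Rightarrow> 'a set" where
  "tset G X = {g \<in> Arr G. cod G g = X}"

definition vertex_group :: "('o, 'a) groupoid \<Rightarrow> 'o \<Rightarrow> 'a set" where
  "vertex_group G X = {g \<in> Arr G. dom G g = X \<and> cod G g = X}"

definition connected_groupoid :: "('o, 'a) groupoid \<Rightarrow> bool" where
  "connected_groupoid G \<longleftrightarrow> groupoid G \<and> Obj G \<noteq> {} \<and>
     (\<forall>X\<in>Obj G. \<forall>Y\<in>Obj G. \<exists>g\<in>Arr G. dom G g = X \<and> cod G g = Y)"

text \<open>A groupoid morphism is a pair (object map, arrow map); it is only relevant on carriers.\<close>
type_synonym ('o1, 'a1, 'o2, 'a2) gmor = "('o1 \<Rightarrow> 'o2) \<times> ('a1 \<Rightarrow> 'a2)"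

definition gmorphism :: "('o1, 'a1) groupoid \<Rightarrow> ('o2, 'a2) groupoid \<Rightarrow> ('o1, 'a1, 'o2, 'a2) gmor \<Rightarrow> bool" where
  "gmorphism G H F \<longleftrightarrow> groupoid G \<and> groupoid H \<and>
     (\<forall>X\<in>Obj G. fst F X \<in> Obj H) \<and>
     (\<forall>g\<in>Arr G. snd F g \<in> Arr H \<and> dom H (snd F g) = fst F (dom G g) \<and> cod H (snd F g) = fst F (cod G g)) \<and>
     (\<forall>g\<in>Arr G. \<forall>f\<in>Arr G. dom G g = cod G f \<longrightarrow> snd F (comp G g f) = comp H (snd F g) (snd F f)) \<and>
     (\<forall>X\<in>Obj G. snd F (ide G X) = ide H (fst F X))"

definition gcomp :: "('o2, 'a2, 'o3, 'a3) gmor \<Rightarrow> ('o1, 'a1, 'o2, 'a2) gmor \<Rightarrow> ('o1, 'a1, 'o3, 'a3) gmor" where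
  "gcomp F E = (fst F \<circ> fst E, snd F \<circ> snd E)"

definition gmor_eq :: "('o1, 'a1) groupoid \<Rightarrow> ('o1, 'a1, 'o2, 'a2) gmor \<Rightarrow> ('o1, 'a1, 'o2, 'a2) gmor \<Rightarrow> bool" where
  "gmor_eq G F E \<longleftrightarrow> (\<forall>X\<in>Obj G. fst F X = fst E X) \<and> (\<forall>g\<in>Arr G. snd F g = snd E g)"

definition giso :: "('o1, 'a1) groupoid \<Rightarrow> ('o2, 'a2) groupoid \<Rightarrow> ('o1, 'a1, 'o2, 'a2) gmor \<Rightarrow> bool" where
  "giso G H F \<longleftrightarrow> gmorphism G H F \<and> bij_betw (fst F) (Obj G) (Obj H) \<and> bij_betw (snd F) (Arr G) (Arr H)"

definition covering_projection :: "('o1, 'a1) groupoid \<Rightarrow> ('o2, 'a2) groupoid \<Rightarrow> ('o1, 'a1, 'o2, 'a2) gmor \<Rightarrow> bool" where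
  "covering_projection Gt G p \<longleftrightarrow> gmorphism Gt G p \<and>
     (\<forall>X\<in>Obj Gt. bij_betw (snd p) (tset Gt X) (tset G (fst p X)))"

definition connected_covering :: "('o1, 'a1) groupoid \<Rightarrow> ('o2, 'a2) groupoid \<Rightarrow> ('o1, 'a1, 'o2, 'a2) gmor \<Rightarrow> bool" where
  "connected_covering Gt G p \<longleftrightarrow> covering_projection Gt G p \<and> connected_groupoid Gt \<and> connected_groupoid G"

text \<open>Normal subgroup of a vertex group (the image of a vertex group is a subgroup automatically).\<close>
definition normal_in :: "('o, 'a) groupoid \<Rightarrow> 'a set \<Rightarrow> 'o \<Rightarrow> bool" where
  "normal_in G N X \<longleftrightarrow> N \<subseteq> vertex_group G X \<and>
     (\<forall>h\<in>vertex_group G X. \<forall>n\<in>N. comp G h (comp G n (inv G h)) \<in> N)"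

definition regular_covering :: "('o1, 'a1) groupoid \<Rightarrow> ('o2, 'a2) groupoid \<Rightarrow> ('o1, 'a1, 'o2, 'a2) gmor \<Rightarrow> bool" where
  "regular_covering Gt G p \<longleftrightarrow> covering_projection Gt G p \<and>
     (\<forall>X\<in>Obj Gt. normal_in G (snd p ` vertex_group Gt X) (fst p X))"

text \<open>Cov(Gt/G): groupoid automorphisms h of Gt with p h = p; canonical representatives
  (identity outside the carriers).\<close>
definition Cov :: "('o1, 'a1) groupoid \<Rightarrow> ('o2, 'a2) groupoid \<Rightarrow> ('o1, 'a1, 'o2, 'a2) gmor \<Rightarrow> ('o1, 'a1, 'o1, 'a1) gmor set" where
  "Cov Gt G p = {h. giso Gt Gt h \<and> gmor_eq Gt (gcomp p h) p \<and>
      (\<forall>X. X \<notin> Obj Gt \<longrightarrow> fst h X = X) \<and> (\<forall>g. g \<notin> Arr Gt \<longrightarrow> snd h g = g)}"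

definition orbit_invariant :: "('o1, 'a1) groupoid \<Rightarrow> ('o1, 'a1, 'o1, 'a1) gmor set \<Rightarrow> ('o2, 'a2) groupoid \<Rightarrow> ('o1, 'a1, 'o2, 'a2) gmor \<Rightarrow> bool" where
  "orbit_invariant Gt \<Gamma> Q f \<longleftrightarrow> gmorphism Gt Q f \<and>
     (\<forall>\<gamma>\<in>\<Gamma>. (\<forall>g\<in>Arr Gt. snd f (snd \<gamma> g) = snd f g) \<and> (\<forall>X\<in>Obj Gt. fst f (fst \<gamma> X) = fst f X))"

text \<open>Universal property of the orbit morphism o : Gt -> Q, with respect to all target groupoids
  whose objects have type 'x and arrows type 'y.\<close>
definition orbit_universal_at ::
  "('o1, 'a1) groupoid \<Rightarrow> ('o1, 'a1, 'o1, 'a1) gmor set \<Rightarrow> ('o2, 'a2) groupoid \<Rightarrow> ('o1, 'a1, 'o2, 'a2) gmor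
     \<Rightarrow> 'x itself \<Rightarrow> 'y itself \<Rightarrow> bool" where
  "orbit_universal_at Gt \<Gamma> Q om _ _ \<longleftrightarrow>
     (\<forall>(K :: ('x, 'y) groupoid) f. orbit_invariant Gt \<Gamma> K f \<longrightarrow>
        (\<exists>f'. gmorphism Q K f' \<and> gmor_eq Gt (gcomp f' om) f \<and>
           (\<forall>f''. gmorphism Q K f'' \<and> gmor_eq Gt (gcomp f'' om) f \<longrightarrow> gmor_eq Q f'' f')))"

definition equivalent_coverings ::
  "('o1, 'a1) groupoid \<Rightarrow> ('o2, 'a2) groupoid \<Rightarrow> ('o1, 'a1, 'o2, 'a2) gmor \<Rightarrow>
   ('o3, 'a3) groupoid \<Rightarrow> ('o4, 'a4) groupoid \<Rightarrow> ('o3, 'a3, 'o4, 'a4) gmor \<Rightarrow> bool" where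
  "equivalent_coverings Gt G p Ht H q \<longleftrightarrow>
     (\<exists>\<phi> \<psi>. giso Ht Gt \<phi> \<and> giso H G \<psi> \<and> gmor_eq Ht (gcomp p \<phi>) (gcomp \<psi> q))"

end

theory Submission
  imports Defs
begin


locale gpd =
  fixes G :: "('o, 'a) groupoid"
  assumes gpd: "groupoid G"
begin

lemma arr_dom[simp]: "g \<in> Arr G \<Longrightarrow> dom G g \<in> Obj G"
  and arr_cod[simp]: "g \<in> Arr G \<Longrightarrow> cod G g \<in> Obj G"
  using gpd unfolding groupoid_def by auto

lemma comp_arr[simp]: "g \<in> Arr G \<Longrightarrow> f \<in> Arr G \<Longrightarrow> dom G g = cod G f \<Longrightarrow> comp G g f \<in> Arr G"
  and dom_comp[simp]: "g \<in> Arr G \<Longrightarrow> f \<in> Arr G \<Longrightarrow> dom G g = cod G f \<Longrightarrow> dom G (comp G g f) = dom G f"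
  and cod_comp[simp]: "g \<in> Arr G \<Longrightarrow> f \<in> Arr G \<Longrightarrow> dom G g = cod G f \<Longrightarrow> cod G (comp G g f) = cod G g"
  using gpd unfolding groupoid_def by auto

lemma assoc[simp]: "h \<in> Arr G \<Longrightarrow> g \<in> Arr G \<Longrightarrow> f \<in> Arr G \<Longrightarrow> dom G h = cod G g \<Longrightarrow> dom G g = cod G f \<Longrightarrow>
   comp G (comp G h g) f = comp G h (comp G g f)"
  using gpd unfolding groupoid_def by metis

lemma ide_arr[simp]: "X \<in> Obj G \<Longrightarrow> ide G X \<in> Arr G"
  and dom_ide[simp]: "X \<in> Obj G \<Longrightarrow> dom G (ide G X) = X"
  and cod_ide[simp]: "X \<in> Obj G \<Longrightarrow> cod G (ide G X) = X"
  using gpd unfolding groupoid_def by auto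

lemma comp_ide_r[simp]: "g \<in> Arr G \<Longrightarrow> X = dom G g \<Longrightarrow> comp G g (ide G X) = g"
  and comp_ide_l[simp]: "g \<in> Arr G \<Longrightarrow> X = cod G g \<Longrightarrow> comp G (ide G X) g = g"
  using gpd unfolding groupoid_def by auto

lemma inv_arr[simp]: "g \<in> Arr G \<Longrightarrow> inv G g \<in> Arr G"
  and dom_inv[simp]: "g \<in> Arr G \<Longrightarrow> dom G (inv G g) = cod G g"
  and cod_inv[simp]: "g \<in> Arr G \<Longrightarrow> cod G (inv G g) = dom G g"
  and comp_inv_l[simp]: "g \<in> Arr G \<Longrightarrow> comp G (inv G g) g = ide G (dom G g)"
  and comp_inv_r[simp]: "g \<in> Arr G \<Longrightarrow> comp G g (inv G g) = ide G (cod G g)"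
  using gpd unfolding groupoid_def by auto

lemma cancel_l[simp]: "g \<in> Arr G \<Longrightarrow> f \<in> Arr G \<Longrightarrow> cod G f = dom G g \<Longrightarrow> comp G (inv G g) (comp G g f) = f"
proof -
  assume a: "g \<in> Arr G" "f \<in> Arr G" "cod G f = dom G g"
  have "comp G (inv G g) (comp G g f) = comp G (comp G (inv G g) g) f"
    using a by (subst assoc) simp_all
  also have "\<dots> = f" using a by simp
  finally show ?thesis .
qed

lemma cancel_r[simp]: "g \<in> Arr G \<Longrightarrow> f \<in> Arr G \<Longrightarrow> cod G f = cod G g \<Longrightarrow> comp G g (comp G (inv G g) f) = f"
proof -
  assume a: "g \<in> Arr G" "f \<in> Arr G" "cod G f = cod G g"
  have "comp G g (comp G (inv G g) f) = comp G (comp G g (inv G g)) f"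
    using a by (subst assoc) simp_all
  also have "\<dots> = f" using a by simp
  finally show ?thesis .
qed

lemma inv_unique: "x \<in> Arr G \<Longrightarrow> g \<in> Arr G \<Longrightarrow> dom G x = cod G g \<Longrightarrow> comp G x g = ide G (dom G g) \<Longrightarrow> x = inv G g"
proof -
  assume a: "x \<in> Arr G" "g \<in> Arr G" "dom G x = cod G g" "comp G x g = ide G (dom G g)"
  have "x = comp G x (comp G g (inv G g))" using a by simp
  also have "\<dots> = comp G (comp G x g) (inv G g)" using a by (subst assoc) simp_all
  also have "\<dots> = inv G g" using a by simp
  finally show ?thesis .
qed

lemma inv_inv[simp]: "g \<in> Arr G \<Longrightarrow> inv G (inv G g) = g"
  by (metis inv_unique inv_arr dom_inv cod_inv comp_inv_r)

lemma inv_comp[simp]: "g \<in> Arr G \<Longrightarrow> f \<in> Arr G \<Longrightarrow> dom G g = cod G f \<Longrightarrow> inv G (comp G g f) = comp G (inv G f) (inv G g)"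
proof -
  assume a: "g \<in> Arr G" "f \<in> Arr G" "dom G g = cod G f"
  have "comp G (comp G (inv G f) (inv G g)) (comp G g f) = ide G (dom G (comp G g f))"
    using a by simp
  then show ?thesis using a by (intro inv_unique[symmetric]) simp_all
qed

end

locale gmor =
  fixes G :: "('o1, 'a1) groupoid" and H :: "('o2, 'a2) groupoid" and F :: "('o1, 'a1, 'o2, 'a2) gmor"
  assumes gm: "gmorphism G H F"
begin

sublocale S: gpd G using gm unfolding gmorphism_def gpd_def by auto
sublocale T: gpd H using gm unfolding gmorphism_def gpd_def by auto

lemma Fobj[simp]: "X \<in> Obj G \<Longrightarrow> fst F X \<in> Obj H"
  and Farr[simp]: "g \<in> Arr G \<Longrightarrow> snd F g \<in> Arr H"
  and Fdom[simp]: "g \<in> Arr G \<Longrightarrow> dom H (snd F g) = fst F (dom G g)"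
  and Fcod[simp]: "g \<in> Arr G \<Longrightarrow> cod H (snd F g) = fst F (cod G g)"
  and Fcomp[simp]: "g \<in> Arr G \<Longrightarrow> f \<in> Arr G \<Longrightarrow> dom G g = cod G f \<Longrightarrow> snd F (comp G g f) = comp H (snd F g) (snd F f)"
  and Fide[simp]: "X \<in> Obj G \<Longrightarrow> snd F (ide G X) = ide H (fst F X)"
  using gm unfolding gmorphism_def by auto

lemma Finv[simp]: "g \<in> Arr G \<Longrightarrow> snd F (inv G g) = inv H (snd F g)"
proof -
  assume a: "g \<in> Arr G"
  have "comp H (snd F (inv G g)) (snd F g) = ide H (dom H (snd F g))"
    using a by (simp flip: Fcomp)
  then show ?thesis using a by (intro T.inv_unique) simp_all
qed

end

lemma gmorphism_comp:
  "gmorphism G H F \<Longrightarrow> gmorphism H K E \<Longrightarrow> gmorphism G K (gcomp E F)"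
  unfolding gmorphism_def gcomp_def by auto

lemma gmorphism_id: "groupoid G \<Longrightarrow> gmorphism G G (id, id)"
  unfolding gmorphism_def by auto



locale cov =
  fixes Gt :: "('ot, 'at) groupoid" and G :: "('o, 'a) groupoid" and p :: "('ot, 'at, 'o, 'a) gmor"
  assumes cp: "covering_projection Gt G p"
begin

sublocale gmor Gt G p using cp unfolding covering_projection_def gmor_def by auto

lemma tbij: "X \<in> Obj Gt \<Longrightarrow> bij_betw (snd p) (tset Gt X) (tset G (fst p X))"
  using cp unfolding covering_projection_def by auto

lemma tinj: "a \<in> Arr Gt \<Longrightarrow> b \<in> Arr Gt \<Longrightarrow> cod Gt a = cod Gt b \<Longrightarrow> snd p a = snd p b \<Longrightarrow> a = b"
  using tbij[of "cod Gt b"] unfolding bij_betw_def inj_on_def tset_def by auto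

lemma tsurj: "Y \<in> Obj Gt \<Longrightarrow> g \<in> Arr G \<Longrightarrow> cod G g = fst p Y \<Longrightarrow> \<exists>a. a \<in> Arr Gt \<and> cod Gt a = Y \<and> snd p a = g"
proof -
  assume a: "Y \<in> Obj Gt" "g \<in> Arr G" "cod G g = fst p Y"
  then have "g \<in> snd p ` tset Gt Y" using tbij[of Y] unfolding bij_betw_def by (simp add: tset_def)
  then show ?thesis unfolding tset_def by blast
qed

definition lift where "lift g Y = (SOME a. a \<in> Arr Gt \<and> cod Gt a = Y \<and> snd p a = g)"

lemma lift: assumes "Y \<in> Obj Gt" "g \<in> Arr G" "cod G g = fst p Y"
  shows "lift g Y \<in> Arr Gt" "cod Gt (lift g Y) = Y" "snd p (lift g Y) = g"
  using someI_ex[OF tsurj[OF assms]] unfolding lift_def by auto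

lemma lift_dom: assumes "Y \<in> Obj Gt" "g \<in> Arr G" "cod G g = fst p Y"
  shows "fst p (dom Gt (lift g Y)) = dom G g"
proof -
  have "dom G (snd p (lift g Y)) = fst p (dom Gt (lift g Y))" using lift(1)[OF assms] by simp
  then show ?thesis using lift(3)[OF assms] by simp
qed

lemma lift_eq: assumes a: "a \<in> Arr Gt" "cod Gt a = Y" "snd p a = g" shows "lift g Y = a"
proof -
  have h: "Y \<in> Obj Gt" "g \<in> Arr G" "cod G g = fst p Y" using a by auto
  show ?thesis using lift[OF h] a by (intro tinj) simp_all
qed

lemma lift_ide: "Y \<in> Obj Gt \<Longrightarrow> lift (ide G (fst p Y)) Y = ide Gt Y"
  by (rule lift_eq) auto

lemma lift_comp: assumes "Y \<in> Obj Gt" "g \<in> Arr G" "f \<in> Arr G" "dom G g = cod G f" "cod G g = fst p Y"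
  shows "lift (comp G g f) Y = comp Gt (lift g Y) (lift f (dom Gt (lift g Y)))"
proof -
  note L1 = lift[OF assms(1,2,5)]
  have d: "cod G f = fst p (dom Gt (lift g Y))" using lift_dom[OF assms(1,2,5)] assms by simp
  note L2 = lift[OF _ assms(3) d]
  show ?thesis using L1 L2 assms by (intro lift_eq) simp_all
qed

lemma surj_obj: assumes "connected_groupoid Gt" "connected_groupoid G" "X \<in> Obj G"
  shows "\<exists>Xt\<in>Obj Gt. fst p Xt = X"
proof -
  obtain X0 where X0: "X0 \<in> Obj Gt" using assms(1) unfolding connected_groupoid_def by auto
  have "fst p X0 \<in> Obj G" using X0 by simp
  then obtain g where g: "g \<in> Arr G" "dom G g = X" "cod G g = fst p X0"
    using assms(2,3) unfolding connected_groupoid_def by blast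
  have "dom Gt (lift g X0) \<in> Obj Gt" using lift(1)[OF X0 g(1,3)] by simp
  then show ?thesis using lift_dom[OF X0 g(1,3)] g by blast
qed

lemma surj_arr: assumes "connected_groupoid Gt" "connected_groupoid G" "g \<in> Arr G"
  shows "\<exists>gt\<in>Arr Gt. snd p gt = g"
proof -
  obtain Y where Y: "Y \<in> Obj Gt" "fst p Y = cod G g" using surj_obj[OF assms(1,2)] assms(3) by force
  then show ?thesis using lift[OF Y(1) assms(3) Y(2)[symmetric]] by blast
qed

end

locale rcov = cov +
  assumes reg: "regular_covering Gt G p"
    and conT: "connected_groupoid Gt" and conB: "connected_groupoid G"
begin

lemma conn: "X \<in> Obj Gt \<Longrightarrow> Y \<in> Obj Gt \<Longrightarrow> \<exists>g\<in>Arr Gt. dom Gt g = X \<and> cod Gt g = Y"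
  using conT unfolding connected_groupoid_def by auto

lemma normal: "Y \<in> Obj Gt \<Longrightarrow> h \<in> vertex_group G (fst p Y) \<Longrightarrow> n \<in> vertex_group Gt Y \<Longrightarrow>
   \<exists>m\<in>vertex_group Gt Y. snd p m = comp G h (comp G (snd p n) (inv G h))"
proof -
  assume a: "Y \<in> Obj Gt" "h \<in> vertex_group G (fst p Y)" "n \<in> vertex_group Gt Y"
  have "normal_in G (snd p ` vertex_group Gt Y) (fst p Y)"
    using reg a(1) unfolding regular_covering_def by blast
  then have "comp G h (comp G (snd p n) (inv G h)) \<in> snd p ` vertex_group Gt Y"
    using a(2,3) unfolding normal_in_def by blast
  then show ?thesis by force
qed

lemma NT: assumes X0: "X0 \<in> Obj Gt" and Y0: "Y0 \<in> Obj Gt" and e: "fst p X0 = fst p Y0"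
  and n: "n \<in> vertex_group Gt X0"
  shows "\<exists>m\<in>vertex_group Gt Y0. snd p m = snd p n"
proof -
  obtain c where c: "c \<in> Arr Gt" "dom Gt c = X0" "cod Gt c = Y0" using conn[OF X0 Y0] by auto
  have n': "n \<in> Arr Gt" "dom Gt n = X0" "cod Gt n = X0" using n unfolding vertex_group_def by auto
  define m0 where "m0 = comp Gt c (comp Gt n (inv Gt c))"
  have m0: "m0 \<in> vertex_group Gt Y0" using c n' unfolding m0_def vertex_group_def by simp
  have h: "inv G (snd p c) \<in> vertex_group G (fst p Y0)" using c e unfolding vertex_group_def by simp
  obtain m where m: "m \<in> vertex_group Gt Y0"
    "snd p m = comp G (inv G (snd p c)) (comp G (snd p m0) (inv G (inv G (snd p c))))"
    using normal[OF Y0 h m0] by blast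
  have "snd p m = snd p n" unfolding m(2) m0_def using c n' e by simp
  then show ?thesis using m(1) by blast
qed

definition ch where "ch X0 Z = (SOME a. a \<in> Arr Gt \<and> dom Gt a = Z \<and> cod Gt a = X0)"

lemma ch: "X0 \<in> Obj Gt \<Longrightarrow> Z \<in> Obj Gt \<Longrightarrow> ch X0 Z \<in> Arr Gt \<and> dom Gt (ch X0 Z) = Z \<and> cod Gt (ch X0 Z) = X0"
  unfolding ch_def by (rule someI_ex) (use conn in blast)

definition tobj where "tobj X0 Y0 Z = (if Z \<in> Obj Gt then dom Gt (lift (snd p (ch X0 Z)) Y0) else Z)"
definition tarr where "tarr X0 Y0 k = (if k \<in> Arr Gt then lift (snd p k) (tobj X0 Y0 (cod Gt k)) else k)"

context
  fixes X0 Y0 assumes X0: "X0 \<in> Obj Gt" and Y0: "Y0 \<in> Obj Gt" and e: "fst p X0 = fst p Y0"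
begin

lemma liftA: assumes "a \<in> Arr Gt" "cod Gt a = X0"
  shows "lift (snd p a) Y0 \<in> Arr Gt" "cod Gt (lift (snd p a) Y0) = Y0" "snd p (lift (snd p a) Y0) = snd p a"
    "fst p (dom Gt (lift (snd p a) Y0)) = fst p (dom Gt a)"
  using lift[OF Y0, of "snd p a"] lift_dom[OF Y0, of "snd p a"] assms e by auto

lemma WD: assumes a: "a \<in> Arr Gt" "cod Gt a = X0"
  shows "dom Gt (lift (snd p a) Y0) = tobj X0 Y0 (dom Gt a)"
proof -
  define a' where "a' = ch X0 (dom Gt a)"
  have a': "a' \<in> Arr Gt" "dom Gt a' = dom Gt a" "cod Gt a' = X0" using ch[OF X0, of "dom Gt a"] a unfolding a'_def by auto
  have nv: "comp Gt a (inv Gt a') \<in> vertex_group Gt X0" using a a' unfolding vertex_group_def by simp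
  obtain m where m: "m \<in> vertex_group Gt Y0" "snd p m = snd p (comp Gt a (inv Gt a'))" using NT[OF X0 Y0 e nv] by blast
  have m': "m \<in> Arr Gt" "dom Gt m = Y0" "cod Gt m = Y0" using m(1) unfolding vertex_group_def by auto
  define L where "L = lift (snd p a') Y0"
  note L = liftA[OF a'(1,3), folded L_def]
  have "lift (snd p a) Y0 = comp Gt m L"
  proof (rule lift_eq)
    show "comp Gt m L \<in> Arr Gt" "cod Gt (comp Gt m L) = Y0" using m' L by simp_all
    have "snd p (comp Gt m L) = comp G (snd p m) (snd p L)" using m' L by simp
    also have "\<dots> = comp G (comp G (snd p a) (inv G (snd p a'))) (snd p a')" using m(2) L a a' by simp
    also have "\<dots> = snd p a" using a a' by simp
    finally show "snd p (comp Gt m L) = snd p a" .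
  qed
  then have "dom Gt (lift (snd p a) Y0) = dom Gt L" using m' L by simp
  then show ?thesis unfolding tobj_def L_def a'_def using a by simp
qed

lemma tobj_Obj: "Z \<in> Obj Gt \<Longrightarrow> tobj X0 Y0 Z \<in> Obj Gt"
  and tobj_p: "Z \<in> Obj Gt \<Longrightarrow> fst p (tobj X0 Y0 Z) = fst p Z"
  using liftA[of "ch X0 Z"] ch[OF X0, of Z] unfolding tobj_def by auto

lemma tobj_X0: "tobj X0 Y0 X0 = Y0"
proof -
  have "tobj X0 Y0 X0 = dom Gt (lift (snd p (ide Gt X0)) Y0)" using WD[of "ide Gt X0"] X0 by simp
  also have "\<dots> = Y0" using lift_ide[OF Y0] e X0 Y0 by simp
  finally show ?thesis .
qed

lemma tarr_props: assumes k: "k \<in> Arr Gt"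
  shows "tarr X0 Y0 k \<in> Arr Gt" "cod Gt (tarr X0 Y0 k) = tobj X0 Y0 (cod Gt k)"
    "snd p (tarr X0 Y0 k) = snd p k" "dom Gt (tarr X0 Y0 k) = tobj X0 Y0 (dom Gt k)"
proof -
  have Z: "tobj X0 Y0 (cod Gt k) \<in> Obj Gt" "fst p (tobj X0 Y0 (cod Gt k)) = fst p (cod Gt k)"
    using tobj_Obj tobj_p k by auto
  show "tarr X0 Y0 k \<in> Arr Gt" "cod Gt (tarr X0 Y0 k) = tobj X0 Y0 (cod Gt k)"
    "snd p (tarr X0 Y0 k) = snd p k"
    using lift[OF Z(1), of "snd p k"] Z k unfolding tarr_def by auto
  define a where "a = ch X0 (cod Gt k)"
  have a: "a \<in> Arr Gt" "dom Gt a = cod Gt k" "cod Gt a = X0" using ch[OF X0, of "cod Gt k"] k unfolding a_def by auto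
  have "tobj X0 Y0 (dom Gt k) = dom Gt (lift (snd p (comp Gt a k)) Y0)" using WD[of "comp Gt a k"] a k by simp
  also have "lift (snd p (comp Gt a k)) Y0 = comp Gt (lift (snd p a) Y0) (lift (snd p k) (dom Gt (lift (snd p a) Y0)))"
    using a k lift_comp[OF Y0, of "snd p a" "snd p k"] e by simp
  also have "dom Gt (lift (snd p a) Y0) = tobj X0 Y0 (cod Gt k)" unfolding tobj_def a_def using k by simp
  finally show "dom Gt (tarr X0 Y0 k) = tobj X0 Y0 (dom Gt k)"
    using lift[OF Z(1), of "snd p k"] liftA[OF a(1,3)] Z a k unfolding tarr_def a_def tobj_def
    by simp
qed

lemma tmor: "gmorphism Gt Gt (tobj X0 Y0, tarr X0 Y0)"
  unfolding gmorphism_def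
proof (intro conjI ballI impI)
  show "groupoid Gt" "groupoid Gt" using gm unfolding gmorphism_def by simp_all
  fix X assume "X \<in> Obj Gt" then show "fst (tobj X0 Y0, tarr X0 Y0) X \<in> Obj Gt" using tobj_Obj by simp
next
  fix g assume g: "g \<in> Arr Gt"
  then show "snd (tobj X0 Y0, tarr X0 Y0) g \<in> Arr Gt"
    "dom Gt (snd (tobj X0 Y0, tarr X0 Y0) g) = fst (tobj X0 Y0, tarr X0 Y0) (dom Gt g)"
    "cod Gt (snd (tobj X0 Y0, tarr X0 Y0) g) = fst (tobj X0 Y0, tarr X0 Y0) (cod Gt g)"
    using tarr_props by auto
next
  fix g f assume gf: "g \<in> Arr Gt" "f \<in> Arr Gt" "dom Gt g = cod Gt f"
  have Z: "tobj X0 Y0 (cod Gt g) \<in> Obj Gt" "fst p (tobj X0 Y0 (cod Gt g)) = fst p (cod Gt g)"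
    using tobj_Obj tobj_p gf by auto
  have "tarr X0 Y0 (comp Gt g f) = lift (comp G (snd p g) (snd p f)) (tobj X0 Y0 (cod Gt g))"
    unfolding tarr_def using gf by simp
  also have "\<dots> = comp Gt (tarr X0 Y0 g) (lift (snd p f) (dom Gt (tarr X0 Y0 g)))"
    using lift_comp[OF Z(1), of "snd p g" "snd p f"] gf Z unfolding tarr_def by simp
  also have "lift (snd p f) (dom Gt (tarr X0 Y0 g)) = tarr X0 Y0 f"
    using tarr_props(4)[OF gf(1)] gf unfolding tarr_def by simp
  finally show "snd (tobj X0 Y0, tarr X0 Y0) (comp Gt g f) =
       comp Gt (snd (tobj X0 Y0, tarr X0 Y0) g) (snd (tobj X0 Y0, tarr X0 Y0) f)" by simp
next
  fix X assume X: "X \<in> Obj Gt"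
  have Z: "tobj X0 Y0 X \<in> Obj Gt" "fst p (tobj X0 Y0 X) = fst p X"
    using tobj_Obj tobj_p X by auto
  show "snd (tobj X0 Y0, tarr X0 Y0) (ide Gt X) = ide Gt (fst (tobj X0 Y0, tarr X0 Y0) X)"
    unfolding tarr_def using X Z lift_ide[OF Z(1)] by simp
qed

lemma tpres: "gmor_eq Gt (gcomp p (tobj X0 Y0, tarr X0 Y0)) p"
  unfolding gmor_eq_def gcomp_def using tobj_p tarr_props(3) by auto

end

lemma fix_id: assumes h: "gmorphism Gt Gt h" and hp: "gmor_eq Gt (gcomp p h) p"
  and X0: "X0 \<in> Obj Gt" and hX: "fst h X0 = X0"
  shows "(\<forall>Z\<in>Obj Gt. fst h Z = Z) \<and> (\<forall>k\<in>Arr Gt. snd h k = k)"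
proof -
  interpret H: gmor Gt Gt h by (rule gmor.intro[OF h])
  have pa: "snd p (snd h k) = snd p k" if "k \<in> Arr Gt" for k using hp that unfolding gmor_eq_def gcomp_def by auto
  have obj: "fst h Z = Z" if Z: "Z \<in> Obj Gt" for Z
  proof -
    obtain a where a: "a \<in> Arr Gt" "dom Gt a = Z" "cod Gt a = X0" using conn[OF Z X0] by auto
    have "snd h a = a" using a pa[OF a(1)] hX by (intro tinj) simp_all
    then show ?thesis using a H.Fdom by metis
  qed
  have "snd h k = k" if k: "k \<in> Arr Gt" for k
    using k pa[OF k] obj[of "cod Gt k"] by (intro tinj) simp_all
  then show ?thesis using obj by blast
qed

lemma trans_cov: assumes X0: "X0 \<in> Obj Gt" and Y0: "Y0 \<in> Obj Gt" and e: "fst p X0 = fst p Y0"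
  shows "\<exists>\<gamma>\<in>Cov Gt G p. fst \<gamma> X0 = Y0"
proof -
  let ?g = "(tobj X0 Y0, tarr X0 Y0)" and ?g' = "(tobj Y0 X0, tarr Y0 X0)"
  have c1: "gmorphism Gt Gt (gcomp ?g' ?g)" "gmorphism Gt Gt (gcomp ?g ?g')"
    using gmorphism_comp tmor X0 Y0 e by metis+
  have p1: "gmor_eq Gt (gcomp p (gcomp ?g' ?g)) p"
    unfolding gmor_eq_def gcomp_def
    using tobj_Obj[OF X0 Y0 e] tobj_p[OF X0 Y0 e] tarr_props[OF X0 Y0 e]
      tobj_Obj[OF Y0 X0 e[symmetric]] tobj_p[OF Y0 X0 e[symmetric]] tarr_props[OF Y0 X0 e[symmetric]]
    by simp
  have p2: "gmor_eq Gt (gcomp p (gcomp ?g ?g')) p"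
    unfolding gmor_eq_def gcomp_def
    using tobj_Obj[OF X0 Y0 e] tobj_p[OF X0 Y0 e] tarr_props[OF X0 Y0 e]
      tobj_Obj[OF Y0 X0 e[symmetric]] tobj_p[OF Y0 X0 e[symmetric]] tarr_props[OF Y0 X0 e[symmetric]]
    by simp
  have i1: "(\<forall>Z\<in>Obj Gt. tobj Y0 X0 (tobj X0 Y0 Z) = Z) \<and> (\<forall>k\<in>Arr Gt. tarr Y0 X0 (tarr X0 Y0 k) = k)"
    using fix_id[OF c1(1) p1 X0] tobj_X0[OF X0 Y0 e] tobj_X0[OF Y0 X0 e[symmetric]] unfolding gcomp_def by simp
  have i2: "(\<forall>Z\<in>Obj Gt. tobj X0 Y0 (tobj Y0 X0 Z) = Z) \<and> (\<forall>k\<in>Arr Gt. tarr X0 Y0 (tarr Y0 X0 k) = k)"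
    using fix_id[OF c1(2) p2 Y0] tobj_X0[OF X0 Y0 e] tobj_X0[OF Y0 X0 e[symmetric]] unfolding gcomp_def by simp
  have b1: "bij_betw (tobj X0 Y0) (Obj Gt) (Obj Gt)"
    by (rule bij_betw_byWitness[where f'="tobj Y0 X0"]) (use i1 i2 tobj_Obj X0 Y0 e in auto)
  have b2: "bij_betw (tarr X0 Y0) (Arr Gt) (Arr Gt)"
    by (rule bij_betw_byWitness[where f'="tarr Y0 X0"]) (use i1 i2 tarr_props(1) X0 Y0 e in auto)
  have "?g \<in> Cov Gt G p"
    unfolding Cov_def giso_def using tmor[OF X0 Y0 e] tpres[OF X0 Y0 e] b1 b2
    by (auto simp: tobj_def tarr_def)
  then show ?thesis using tobj_X0[OF X0 Y0 e] by force
qed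

end


lemma giso_cov: assumes "giso G Q u" shows "covering_projection G Q u"
proof -
  have gm: "gmorphism G Q u" and bo: "bij_betw (fst u) (Obj G) (Obj Q)" and ba: "bij_betw (snd u) (Arr G) (Arr Q)"
    using assms unfolding giso_def by auto
  interpret U: gmor G Q u by (rule gmor.intro[OF gm])
  have "bij_betw (snd u) (tset G X) (tset Q (fst u X))" if X: "X \<in> Obj G" for X
    unfolding bij_betw_def
  proof
    show "inj_on (snd u) (tset G X)" using ba unfolding bij_betw_def tset_def by (auto intro: inj_on_subset)
    show "snd u ` tset G X = tset Q (fst u X)"
    proof
      show "snd u ` tset G X \<subseteq> tset Q (fst u X)" unfolding tset_def by auto
      show "tset Q (fst u X) \<subseteq> snd u ` tset G X"
      proof
        fix k assume k: "k \<in> tset Q (fst u X)"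
        then obtain g where g: "g \<in> Arr G" "k = snd u g" using ba unfolding tset_def bij_betw_def by auto
        have "fst u (cod G g) = fst u X" using k g unfolding tset_def by auto
        then have "cod G g = X" using bo X g(1) unfolding bij_betw_def inj_on_def by auto
        then show "k \<in> snd u ` tset G X" using g unfolding tset_def by auto
      qed
    qed
  qed
  then show ?thesis using gm unfolding covering_projection_def by auto
qed

lemma cov_comp: assumes f: "covering_projection A B f" and g: "covering_projection B C g"
  shows "covering_projection A C (gcomp g f)"
proof -
  interpret F: cov A B f by (rule cov.intro[OF f])
  interpret Gg: cov B C g by (rule cov.intro[OF g])
  have "bij_betw (snd g \<circ> snd f) (tset A X) (tset C (fst g (fst f X)))" if X: "X \<in> Obj A" for X
    using F.tbij[OF X] Gg.tbij[of "fst f X"] X by (auto intro: bij_betw_trans)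
  then show ?thesis unfolding covering_projection_def
    using gmorphism_comp[OF F.gm Gg.gm] by (simp add: gcomp_def)
qed

lemma cov_eq: assumes f: "covering_projection A B f" and g: "gmorphism A B f'" and e: "gmor_eq A f f'"
  shows "covering_projection A B f'"
proof -
  interpret F: cov A B f by (rule cov.intro[OF f])
  have "bij_betw (snd f') (tset A X) (tset B (fst f' X))" if X: "X \<in> Obj A" for X
  proof -
    have "bij_betw (snd f') (tset A X) (tset B (fst f X))"
    proof -
      have eq: "\<And>a. a \<in> tset A X \<Longrightarrow> snd f a = snd f' a" using e by (auto simp: gmor_eq_def tset_def)
      show ?thesis using bij_betw_cong[of "tset A X" "snd f" "snd f'", OF eq] F.tbij[OF X] by simp
    qed
    then show ?thesis using e X unfolding gmor_eq_def by auto
  qed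
  then show ?thesis using g unfolding covering_projection_def by auto
qed

lemma giso_id: "groupoid G \<Longrightarrow> giso G G (id, id)"
  unfolding giso_def using gmorphism_id by auto

context rcov
begin

lemma p_invariant: "orbit_invariant Gt (Cov Gt G p) G p"
  unfolding orbit_invariant_def Cov_def gmor_eq_def gcomp_def using gm by auto

lemma univ_unique: assumes f1: "gmorphism G K f1" and f2: "gmorphism G K f2"
  and e1: "gmor_eq Gt (gcomp f1 p) f" and e2: "gmor_eq Gt (gcomp f2 p) f"
  shows "gmor_eq G f1 f2"
  unfolding gmor_eq_def
proof (intro conjI ballI)
  fix X assume "X \<in> Obj G"
  then obtain Xt where "Xt \<in> Obj Gt" "fst p Xt = X" using surj_obj[OF conT conB] by blast
  then show "fst f1 X = fst f2 X" using e1 e2 unfolding gmor_eq_def gcomp_def by auto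
next
  fix g assume "g \<in> Arr G"
  then obtain a where "a \<in> Arr Gt" "snd p a = g" using surj_arr[OF conT conB] by blast
  then show "snd f1 g = snd f2 g" using e1 e2 unfolding gmor_eq_def gcomp_def by auto
qed

lemma univ_exists: assumes inv: "orbit_invariant Gt (Cov Gt G p) K f"
  shows "\<exists>f'. gmorphism G K f' \<and> gmor_eq Gt (gcomp f' p) f"
proof -
  have fm: "gmorphism Gt K f" using inv unfolding orbit_invariant_def by auto
  interpret F: gmor Gt K f by (rule gmor.intro[OF fm])
  have io: "fst f (fst \<gamma> X) = fst f X" if "\<gamma> \<in> Cov Gt G p" "X \<in> Obj Gt" for \<gamma> X
    using inv that unfolding orbit_invariant_def by auto
  have ia: "snd f (snd \<gamma> a) = snd f a" if "\<gamma> \<in> Cov Gt G p" "a \<in> Arr Gt" for \<gamma> a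
    using inv that unfolding orbit_invariant_def by auto
  have fo: "fst f X1 = fst f X2" if hx: "X1 \<in> Obj Gt" "X2 \<in> Obj Gt" "fst p X1 = fst p X2" for X1 X2
  proof -
    obtain \<gamma> where "\<gamma> \<in> Cov Gt G p" "fst \<gamma> X1 = X2" using trans_cov[OF hx] by blast
    then show ?thesis using io[of \<gamma> X1] hx by simp
  qed
  have fa: "snd f a1 = snd f a2" if a: "a1 \<in> Arr Gt" "a2 \<in> Arr Gt" "snd p a1 = snd p a2" for a1 a2
  proof -
    have "fst p (cod Gt a1) = fst p (cod Gt a2)" using a Fcod[of a1] Fcod[of a2] by simp
    then obtain \<gamma> where g: "\<gamma> \<in> Cov Gt G p" "fst \<gamma> (cod Gt a1) = cod Gt a2"
      using trans_cov[of "cod Gt a1" "cod Gt a2"] a by auto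
    have gm: "gmorphism Gt Gt \<gamma>" and ge: "gmor_eq Gt (gcomp p \<gamma>) p"
      using g(1) unfolding Cov_def giso_def by auto
    interpret Ga: gmor Gt Gt \<gamma> by (rule gmor.intro[OF gm])
    have "snd p (snd \<gamma> a1) = snd p a1" using ge a(1) unfolding gmor_eq_def gcomp_def by auto
    then have "snd \<gamma> a1 = a2" using a g(2) by (intro tinj) simp_all
    then show ?thesis using ia[OF g(1) a(1)] by simp
  qed
  define f' where "f' = ((\<lambda>X. fst f (SOME Xt. Xt \<in> Obj Gt \<and> fst p Xt = X)),
                        (\<lambda>g. snd f (SOME a. a \<in> Arr Gt \<and> snd p a = g)))"
  have k1: "fst f' (fst p Xt) = fst f Xt" if Xt: "Xt \<in> Obj Gt" for Xt
  proof -
    have "\<exists>Z. Z \<in> Obj Gt \<and> fst p Z = fst p Xt" using Xt by blast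
    from someI_ex[OF this] have Z: "(SOME Z. Z \<in> Obj Gt \<and> fst p Z = fst p Xt) \<in> Obj Gt"
      "fst p (SOME Z. Z \<in> Obj Gt \<and> fst p Z = fst p Xt) = fst p Xt" by blast+
    have "fst f' (fst p Xt) = fst f (SOME Z. Z \<in> Obj Gt \<and> fst p Z = fst p Xt)" unfolding f'_def by simp
    also have "\<dots> = fst f Xt" using fo[OF Z(1) Xt Z(2)] .
    finally show ?thesis .
  qed
  have k2: "snd f' (snd p a) = snd f a" if a: "a \<in> Arr Gt" for a
  proof -
    have "\<exists>b. b \<in> Arr Gt \<and> snd p b = snd p a" using a by blast
    from someI_ex[OF this] have Z: "(SOME b. b \<in> Arr Gt \<and> snd p b = snd p a) \<in> Arr Gt"
      "snd p (SOME b. b \<in> Arr Gt \<and> snd p b = snd p a) = snd p a" by blast+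
    have "snd f' (snd p a) = snd f (SOME b. b \<in> Arr Gt \<and> snd p b = snd p a)" unfolding f'_def by simp
    also have "\<dots> = snd f a" using fa[OF Z(1) a Z(2)] .
    finally show ?thesis .
  qed
  have "gmorphism G K f'"
    unfolding gmorphism_def
  proof (intro conjI ballI impI)
    show "groupoid G" "groupoid K" using fm gm unfolding gmorphism_def by simp_all
  next
    fix X assume "X \<in> Obj G"
    then obtain Xt where "Xt \<in> Obj Gt" "fst p Xt = X" using surj_obj[OF conT conB] by blast
    then show "fst f' X \<in> Obj K" using k1 by auto
  next
    fix g assume "g \<in> Arr G"
    then obtain a where a: "a \<in> Arr Gt" "snd p a = g" using surj_arr[OF conT conB] by blast
    show "snd f' g \<in> Arr K" using k2[of a] a by simp
    have dg: "dom G g = fst p (dom Gt a)" "cod G g = fst p (cod Gt a)" using Fdom[OF a(1)] Fcod[OF a(1)] a(2) by simp_all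
    show "dom K (snd f' g) = fst f' (dom G g)" unfolding dg using k2[of a] k1[of "dom Gt a"] a by simp
    show "cod K (snd f' g) = fst f' (cod G g)" unfolding dg using k2[of a] k1[of "cod Gt a"] a by simp
  next
    fix g h assume gh: "g \<in> Arr G" "h \<in> Arr G" "dom G g = cod G h"
    then obtain a where a: "a \<in> Arr Gt" "snd p a = g" using surj_arr[OF conT conB] by blast
    have c: "cod G h = fst p (dom Gt a)" using a gh by auto
    define b where "b = lift h (dom Gt a)"
    have ad: "dom Gt a \<in> Obj Gt" using a(1) by simp
    note b = lift[OF ad gh(2) c, folded b_def]
    have ab: "dom Gt a = cod Gt b" using b a by simp
    have "comp G g h = snd p (comp Gt a b)" using a b(1,3) ab by simp
    then have "snd f' (comp G g h) = snd f (comp Gt a b)" using k2[of "comp Gt a b"] a b(1) ab by simp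
    also have "\<dots> = comp K (snd f a) (snd f b)" using a b(1) ab by simp
    also have "\<dots> = comp K (snd f' g) (snd f' h)" using k2[of a] k2[of b] a b(1,3) by simp
    finally show "snd f' (comp G g h) = comp K (snd f' g) (snd f' h)" .
  next
    fix X assume "X \<in> Obj G"
    then obtain Xt where Xt: "Xt \<in> Obj Gt" "fst p Xt = X" using surj_obj[OF conT conB] by blast
    have "ide G X = snd p (ide Gt Xt)" using Xt by simp
    then show "snd f' (ide G X) = ide K (fst f' X)" using k1[of Xt] k2[of "ide Gt Xt"] Xt by simp
  qed
  moreover have "gmor_eq Gt (gcomp f' p) f" unfolding gmor_eq_def gcomp_def using k1 k2 by auto
  ultimately show ?thesis by blast
qed

end

lemma orbit_iso:
  fixes Gt :: "('ot, 'at) groupoid" and G :: "('o, 'a) groupoid" and p :: "('ot, 'at, 'o, 'a) gmor"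
    and Q :: "('oq, 'aq) groupoid" and om :: "('ot, 'at, 'oq, 'aq) gmor"
  assumes rc: "rcov Gt G p" and oi: "orbit_invariant Gt (Cov Gt G p) Q om"
    and u1: "orbit_universal_at Gt (Cov Gt G p) Q om TYPE('o) TYPE('a)"
    and u2: "orbit_universal_at Gt (Cov Gt G p) Q om TYPE('oq) TYPE('aq)"
  shows "\<exists>u v. giso G Q u \<and> giso Q G v \<and> gmor_eq Gt (gcomp u p) om \<and> gmor_eq Gt (gcomp v om) p
     \<and> gmor_eq G (gcomp v u) (id, id) \<and> gmor_eq Q (gcomp u v) (id, id) \<and> covering_projection Gt Q om"
proof -
  interpret rcov Gt G p by (rule rc)
  have omm: "gmorphism Gt Q om" using oi unfolding orbit_invariant_def by auto
  have gG: "groupoid G" and gQ: "groupoid Q" using gm omm unfolding gmorphism_def by auto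
  obtain v where v: "gmorphism Q G v" "gmor_eq Gt (gcomp v om) p"
    using u1 p_invariant unfolding orbit_universal_at_def by blast
  obtain u where u: "gmorphism G Q u" "gmor_eq Gt (gcomp u p) om"
    using univ_exists[OF oi] by blast
  interpret V: gmor Q G v by (rule gmor.intro[OF v(1)])
  interpret U: gmor G Q u by (rule gmor.intro[OF u(1)])
  interpret O: gmor Gt Q om by (rule gmor.intro[OF omm])
  have vu: "gmor_eq G (gcomp v u) (id, id)"
  proof (rule univ_unique)
    show "gmorphism G G (gcomp v u)" by (rule gmorphism_comp[OF u(1) v(1)])
    show "gmorphism G G (id, id)" by (rule gmorphism_id[OF gG])
    show "gmor_eq Gt (gcomp (gcomp v u) p) p" using u(2) v(2) unfolding gmor_eq_def gcomp_def by auto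
    show "gmor_eq Gt (gcomp (id, id) p) p" unfolding gmor_eq_def gcomp_def by auto
  qed
  have uv: "gmor_eq Q (gcomp u v) (id, id)"
  proof -
    obtain f0 where f0: "\<And>f''. gmorphism Q Q f'' \<and> gmor_eq Gt (gcomp f'' om) om \<Longrightarrow> gmor_eq Q f'' f0"
      using u2 oi unfolding orbit_universal_at_def by blast
    have "gmor_eq Gt (gcomp (gcomp u v) om) om" using u(2) v(2) unfolding gmor_eq_def gcomp_def by auto
    then have 1: "gmor_eq Q (gcomp u v) f0" using f0 gmorphism_comp[OF v(1) u(1)] by blast
    have "gmor_eq Gt (gcomp (id, id) om) om" unfolding gmor_eq_def gcomp_def by auto
    then have 2: "gmor_eq Q (id, id) f0" using f0 gmorphism_id[OF gQ] by blast
    show ?thesis using 1 2 unfolding gmor_eq_def by auto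
  qed
  have vu': "\<And>X. X \<in> Obj G \<Longrightarrow> fst v (fst u X) = X" "\<And>g. g \<in> Arr G \<Longrightarrow> snd v (snd u g) = g"
    using vu unfolding gmor_eq_def gcomp_def by auto
  have uv': "\<And>X. X \<in> Obj Q \<Longrightarrow> fst u (fst v X) = X" "\<And>g. g \<in> Arr Q \<Longrightarrow> snd u (snd v g) = g"
    using uv unfolding gmor_eq_def gcomp_def by auto
  have gu: "giso G Q u" unfolding giso_def
  proof (intro conjI)
    show "bij_betw (fst u) (Obj G) (Obj Q)"
      by (rule bij_betw_byWitness[where f'="fst v"]) (use vu' uv' in auto)
    show "bij_betw (snd u) (Arr G) (Arr Q)"
      by (rule bij_betw_byWitness[where f'="snd v"]) (use vu' uv' in auto)
  qed (rule u(1))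
  have gv: "giso Q G v" unfolding giso_def
  proof (intro conjI)
    show "bij_betw (fst v) (Obj Q) (Obj G)"
      by (rule bij_betw_byWitness[where f'="fst u"]) (use vu' uv' in auto)
    show "bij_betw (snd v) (Arr Q) (Arr G)"
      by (rule bij_betw_byWitness[where f'="snd u"]) (use vu' uv' in auto)
  qed (rule v(1))
  have "covering_projection Gt Q om"
    by (rule cov_eq[OF cov_comp[OF cp giso_cov[OF gu]] omm u(2)])
  then show ?thesis using gu gv u v vu uv by blast
qed


theorem mainTheorem10:
  fixes G :: "('o, 'a) groupoid"
    and Gt :: "('ot, 'at) groupoid"
    and Ht :: "('oh, 'ah) groupoid"
    and QG :: "('og, 'ag) groupoid"
    and QP :: "('op, 'ap) groupoid"
    and p :: "('ot, 'at, 'o, 'a) gmor"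
    and r :: "('ot, 'at, 'oh, 'ah) gmor"
    and q :: "('oh, 'ah, 'o, 'a) gmor"
    and p' :: "('ot, 'at, 'og, 'ag) gmor"
    and r' :: "('ot, 'at, 'op, 'ap) gmor"
  assumes "connected_groupoid G"
    and "connected_covering Gt G p" and "connected_covering Gt Ht r" and "connected_covering Ht G q"
    and "gmor_eq Gt (gcomp q r) p"
    and "regular_covering Gt G p" and "regular_covering Gt Ht r"
    \<comment> \<open>p' : Gt -> QG is the orbit morphism of Gamma = Cov(Gt/G)\<close>
    and "orbit_invariant Gt (Cov Gt G p) QG p'"
    and "orbit_universal_at Gt (Cov Gt G p) QG p' TYPE('o) TYPE('a)"
    and "orbit_universal_at Gt (Cov Gt G p) QG p' TYPE('ot) TYPE('at)"
    and "orbit_universal_at Gt (Cov Gt G p) QG p' TYPE('oh) TYPE('ah)"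
    and "orbit_universal_at Gt (Cov Gt G p) QG p' TYPE('og) TYPE('ag)"
    and "orbit_universal_at Gt (Cov Gt G p) QG p' TYPE('op) TYPE('ap)"
    \<comment> \<open>r' : Gt -> QP is the orbit morphism of Pi = Cov(Gt/Ht)\<close>
    and "orbit_invariant Gt (Cov Gt Ht r) QP r'"
    and "orbit_universal_at Gt (Cov Gt Ht r) QP r' TYPE('o) TYPE('a)"
    and "orbit_universal_at Gt (Cov Gt Ht r) QP r' TYPE('ot) TYPE('at)"
    and "orbit_universal_at Gt (Cov Gt Ht r) QP r' TYPE('oh) TYPE('ah)"
    and "orbit_universal_at Gt (Cov Gt Ht r) QP r' TYPE('og) TYPE('ag)"
    and "orbit_universal_at Gt (Cov Gt Ht r) QP r' TYPE('op) TYPE('ap)"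
  shows "\<exists>q' :: ('op, 'ap, 'og, 'ag) gmor.
           covering_projection QP QG q' \<and> gmor_eq Gt (gcomp q' r') p' \<and>
           covering_projection Gt QG p' \<and> covering_projection Gt QP r' \<and>
           equivalent_coverings Gt QG p' Gt G p \<and>
           equivalent_coverings Gt QP r' Gt Ht r \<and>
           equivalent_coverings QP QG q' Ht G q"
  proof -
  note A = assms
  have rp: "rcov Gt G p" using A(2,6) unfolding rcov_def rcov_axioms_def cov_def connected_covering_def by auto
  have rr: "rcov Gt Ht r" using A(3,7) unfolding rcov_def rcov_axioms_def cov_def connected_covering_def by auto
  have qc: "covering_projection Ht G q" using A(4) unfolding connected_covering_def by auto
  obtain up vp where P: "giso G QG up" "giso QG G vp" "gmor_eq Gt (gcomp up p) p'" "gmor_eq Gt (gcomp vp p') p"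
     "gmor_eq G (gcomp vp up) (id, id)" "gmor_eq QG (gcomp up vp) (id, id)" "covering_projection Gt QG p'"
    using orbit_iso[OF rp A(8) A(9) A(12)] by blast
  obtain ur vr where R: "giso Ht QP ur" "giso QP Ht vr" "gmor_eq Gt (gcomp ur r) r'" "gmor_eq Gt (gcomp vr r') r"
     "gmor_eq Ht (gcomp vr ur) (id, id)" "gmor_eq QP (gcomp ur vr) (id, id)" "covering_projection Gt QP r'"
    using orbit_iso[OF rr A(14) A(17) A(19)] by blast
  define q' where "q' = gcomp up (gcomp q vr)"
  have c1: "covering_projection QP QG q'"
    unfolding q'_def by (rule cov_comp[OF cov_comp[OF giso_cov[OF R(2)] qc] giso_cov[OF P(1)]])
  have rO: "\<And>X. X \<in> Obj Gt \<Longrightarrow> fst r X \<in> Obj Ht" and rA: "\<And>g. g \<in> Arr Gt \<Longrightarrow> snd r g \<in> Arr Ht"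
    using rr unfolding rcov_def cov_def covering_projection_def gmorphism_def by auto
  have c2: "gmor_eq Gt (gcomp q' r') p'"
    using R(4) A(5) P(3) unfolding q'_def gmor_eq_def gcomp_def by auto
  have gGt: "groupoid Gt" using rr unfolding rcov_def cov_def covering_projection_def gmorphism_def by auto
  have e1: "equivalent_coverings Gt QG p' Gt G p"
    unfolding equivalent_coverings_def
    using giso_id[OF gGt] P(1,3) unfolding gmor_eq_def gcomp_def by fastforce
  have e2: "equivalent_coverings Gt QP r' Gt Ht r"
    unfolding equivalent_coverings_def
    using giso_id[OF gGt] R(1,3) unfolding gmor_eq_def gcomp_def by fastforce
  have "gmor_eq Ht (gcomp q' ur) (gcomp up q)"
    using R(5) unfolding q'_def gmor_eq_def gcomp_def by auto
  then have e3: "equivalent_coverings QP QG q' Ht G q"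
    unfolding equivalent_coverings_def using R(1) P(1) by blast
  show ?thesis using c1 c2 P(7) R(7) e1 e2 e3 by blast
qed

end
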